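(* For all fixed $\alpha,\delta\in(0,1)$ there is a constant $C>0$ such that for every sufficiently large $n$ there is a Boolean function $f:\{0,1\}^n\to\{0,1\}$ with $\mu(f)=\lceil \alpha 2^n\rceil 2^{-n}$ (so $\mu(f)=\alpha$ up to the unavoidable rounding to a multiple of $2^{-n}$) such that $$J^+_S(f)<1-n^{-C}\quad\text{for every } S\subseteq[n] \text{ with } |S|=\lfloor(1/2-\delta)n\rfloor .$$
   Context: $[n]=\{1,\dots,n\}$. For a finite set $T$, $\Omega(T)=\{0,1\}^T$ and $\mu_T$ is the uniform probability measure on $\Omega(T)$; $\mu=\mu_{[n]}$, and for Boolean $f$, $\mu(f)=\mu(\{x:f(x)=1\})$. Points of $\Omega([n])$ are written $(u,v)$ with $u\in\Omega([n]\setminus S)$, $v\in\Omega(S)$. For $S\subseteq[n]$, $J^+_S(f)=\mu_{[n]\setminus S}(\{u\in\Omega([n]\setminus S):\exists v\in\Omega(S),\ f(u,v)=1\})$, i.e. the probability that a uniformly random setting of the variables outside $S$ does not force $f=0$. (The influence of $S$ toward one is $I^+_S(f)=J^+_S(f)-\mu(f)$.) *)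

theory Defs
  imports Complex_Main
begin

text \<open>Points of \<Omega>(T) = {0,1}^T are encoded by their supports, i.e. subsets of T.
  A Boolean function on \<Omega>([n]) is a predicate on subsets of {1..n}.\<close>

definition cube :: "nat set \<Rightarrow> nat set set" where
  "cube T = Pow T"

definition mu :: "nat \<Rightarrow> (nat set \<Rightarrow> bool) \<Rightarrow> real" where
  "mu n f = real (card {x \<in> cube {1..n}. f x}) / 2 ^ n"

definition Jplus :: "nat \<Rightarrow> nat set \<Rightarrow> (nat set \<Rightarrow> bool) \<Rightarrow> real" where
  "Jplus n S f = real (card {u \<in> cube ({1..n} - S). \<exists>v \<in> cube S. f (u \<union> v)})
                 / 2 ^ card ({1..n} - S)"

end

theory Submission
  imports Defs "HOL-Real_Asymp.Real_Asymp"
begin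


lemma count_split:
  assumes "finite U" "B \<subseteq> U"
  shows "card {x \<in> Pow U. P (x \<inter> B)} = card {a \<in> Pow B. P a} * 2 ^ card (U - B)"
proof -
  have eq: "{x \<in> Pow U. P (x \<inter> B)} = (\<lambda>(a,b). a \<union> b) ` ({a \<in> Pow B. P a} \<times> Pow (U - B))"
  proof (rule set_eqI, rule iffI)
    fix x assume "x \<in> {x \<in> Pow U. P (x \<inter> B)}"
    then have "(x \<inter> B, x - B) \<in> {a \<in> Pow B. P a} \<times> Pow (U - B)" "x = (\<lambda>(a,b). a \<union> b) (x \<inter> B, x - B)"
      by auto
    then show "x \<in> (\<lambda>(a,b). a \<union> b) ` ({a \<in> Pow B. P a} \<times> Pow (U - B))" by blast
  next
    fix x assume "x \<in> (\<lambda>(a,b). a \<union> b) ` ({a \<in> Pow B. P a} \<times> Pow (U - B))"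
    then obtain a b where ab: "a \<subseteq> B" "P a" "b \<subseteq> U - B" "x = a \<union> b" by auto
    then have "x \<inter> B = a" by auto
    then show "x \<in> {x \<in> Pow U. P (x \<inter> B)}" using ab assms by auto
  qed
  have inj: "inj_on (\<lambda>(a,b). a \<union> b) ({a \<in> Pow B. P a} \<times> Pow (U - B))"
  proof (rule inj_onI)
    fix x y assume x: "x \<in> {a \<in> Pow B. P a} \<times> Pow (U - B)" and y: "y \<in> {a \<in> Pow B. P a} \<times> Pow (U - B)"
      and e: "(\<lambda>(a,b). a \<union> b) x = (\<lambda>(a,b). a \<union> b) y"
    obtain a b where xab: "x = (a,b)" by fastforce
    obtain a' b' where yab: "y = (a',b')" by fastforce
    have "a = (a \<union> b) \<inter> B" "b = (a \<union> b) - B" "a' = (a' \<union> b') \<inter> B" "b' = (a' \<union> b') - B"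
      using x y xab yab by auto
    then show "x = y" using e xab yab by simp
  qed
  have fin: "finite (U - B)" "finite B" using assms finite_subset by auto
  have "card ({a \<in> Pow B. P a} \<times> Pow (U - B)) = card {a \<in> Pow B. P a} * 2 ^ card (U - B)"
    by (simp only: card_cartesian_product card_Pow[OF fin(1)])
  then show ?thesis unfolding eq card_image[OF inj] .
qed

lemma small_count:
  assumes "finite B"
  shows "card {a \<in> Pow B. card a \<le> t} = (\<Sum>j\<le>t. card B choose j)"
proof -
  have eq: "{a \<in> Pow B. card a \<le> t} = (\<Union>j\<in>{..t}. {a. a \<subseteq> B \<and> card a = j})" by auto
  have "card (\<Union>j\<in>{..t}. {a. a \<subseteq> B \<and> card a = j}) = (\<Sum>j\<le>t. card {a. a \<subseteq> B \<and> card a = j})"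
    by (rule card_UN_disjoint) (auto intro: finite_subset[of _ "Pow B"] simp: assms)
  then show ?thesis unfolding eq by (simp add: n_subsets assms)
qed

lemma binom_bound:
  fixes r :: real
  assumes "0 < r" "r \<le> 1"
  shows "real (\<Sum>j\<le>t. m choose j) \<le> (1/r)^t * (1+r)^m"
proof -
  have "real (\<Sum>j\<le>t. m choose j) = (\<Sum>j\<le>t. real (m choose j))" by simp
  also have "\<dots> \<le> (\<Sum>j\<le>t. real (m choose j) * (r^j * (1/r)^t))"
  proof (rule sum_mono)
    fix j assume "j \<in> {..t}"
    then have "j \<le> t" by simp
    have "(1/r)^t = (1/r)^j * (1/r)^(t-j)" using \<open>j \<le> t\<close> by (simp add: power_add[symmetric])
    moreover have "(1/r)^(t-j) \<ge> 1" using assms by (simp add: one_le_power)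
    ultimately have "r^j * (1/r)^t \<ge> 1" using assms by (simp add: power_divide)
    then show "real (m choose j) \<le> real (m choose j) * (r^j * (1/r)^t)"
      by (simp add: mult_le_cancel_left1)
  qed
  also have "\<dots> = (1/r)^t * (\<Sum>j\<le>t. real (m choose j) * r^j)"
    by (simp add: sum_distrib_left algebra_simps)
  also have "(\<Sum>j\<le>t. real (m choose j) * r^j) \<le> (\<Sum>j\<le>max t m. real (m choose j) * r^j)"
    by (rule sum_mono2) (use assms in auto)
  also have "(\<Sum>j\<le>max t m. real (m choose j) * r^j) = (\<Sum>j\<le>m. real (m choose j) * r^j)"
    by (rule sum.mono_neutral_right) auto
  also have "\<dots> = (r + 1)^m" by (simp add: binomial_ring[of r 1 m])
  finally show ?thesis using assms by (simp add: add.commute mult_left_mono)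
qed

lemma core:
  fixes n m t k M :: nat
  assumes m0: "0 < m" and mn: "m \<le> n" and kp: "k < (n div m) * (t+1)"
    and cnt: "(n div m) * ((\<Sum>j\<le>t. m choose j) * 2^(n-m)) + M \<le> 2^n"
  shows "\<exists>f. card {x \<in> cube {1..n}. f x} = M \<and>
           (\<forall>S. S \<subseteq> {1..n} \<and> card S = k \<longrightarrow> Jplus n S f \<le> 1 - 1/2^m)"
proof -
  define p where "p = n div m"
  define B where "B i = {i*m+1..i*m+m}" for i
  have pm: "p * m \<le> n" unfolding p_def by (simp add: div_times_less_eq_dividend)
  have Bsub: "B i \<subseteq> {1..n}" if "i < p" for i
  proof -
    have "i*m + m \<le> p*m" using that by (metis Suc_leI mult_Suc mult.commute add.commute mult_le_mono1)
    then show ?thesis unfolding B_def using pm by auto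
  qed
  have cardB: "card (B i) = m" for i unfolding B_def by simp
  have Bdisj: "B i \<inter> B j = {}" if "i \<noteq> j" for i j
  proof -
    { fix i j :: nat assume "i < j"
      then have "i*m + m \<le> j*m" by (metis Suc_leI mult_Suc mult.commute add.commute mult_le_mono1)
      then have "B i \<inter> B j = {}" unfolding B_def by auto }
    then show ?thesis using that by (metis Int_commute nat_neq_iff)
  qed
  define Z where "Z = {x \<in> Pow {1..n}. \<exists>i<p. card (x \<inter> B i) \<le> t}"
  have Zeq: "Z = (\<Union>i\<in>{..<p}. {x \<in> Pow {1..n}. card (x \<inter> B i) \<le> t})" unfolding Z_def by auto
  have each: "card {x \<in> Pow {1..n}. card (x \<inter> B i) \<le> t} = (\<Sum>j\<le>t. m choose j) * 2^(n-m)" if "i < p" for i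
  proof -
    have "card {x \<in> Pow {1..n}. card (x \<inter> B i) \<le> t} = card {a \<in> Pow (B i). card a \<le> t} * 2 ^ card ({1..n} - B i)"
      by (rule count_split) (use Bsub[OF that] in auto)
    also have "card ({1..n} - B i) = n - m" using Bsub[OF that] cardB[of i]
      by (simp add: card_Diff_subset finite_subset)
    also have "card {a \<in> Pow (B i). card a \<le> t} = (\<Sum>j\<le>t. m choose j)"
      using small_count[of "B i" t] cardB[of i] unfolding B_def by simp
    finally show ?thesis .
  qed
  have "card Z \<le> (\<Sum>i<p. card {x \<in> Pow {1..n}. card (x \<inter> B i) \<le> t})"
    unfolding Zeq by (rule card_UN_le) simp
  also have "\<dots> = p * ((\<Sum>j\<le>t. m choose j) * 2^(n-m))" using each by simp
  finally have cZ: "card Z + M \<le> 2^n" using cnt unfolding p_def by linarith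
  define G where "G = Pow {1..n} - Z"
  have ZP: "Z \<subseteq> Pow {1..n}" unfolding Z_def by auto
  have cG: "card G = 2^n - card Z" unfolding G_def
    using card_Diff_subset[OF finite_subset[OF ZP] ZP] by (simp add: card_Pow)
  have "M \<le> card G" using cG cZ by linarith
  then obtain F where F: "F \<subseteq> G" "card F = M" by (metis obtain_subset_with_card_n)
  define f where "f x = (x \<in> F)" for x
  have "{x \<in> cube {1..n}. f x} = F" using F(1) unfolding f_def cube_def G_def by auto
  then have c1: "card {x \<in> cube {1..n}. f x} = M" using F by simp
  have c2: "Jplus n S f \<le> 1 - 1/2^m" if S: "S \<subseteq> {1..n}" "card S = k" for S
  proof -
    obtain i where i: "i < p" "card (S \<inter> B i) \<le> t"
    proof (rule ccontr)
      assume "\<not> thesis"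
      then have big: "\<forall>i<p. t + 1 \<le> card (S \<inter> B i)" using that by fastforce
      have "p * (t+1) = (\<Sum>i<p. t+1)" by simp
      also have "\<dots> \<le> (\<Sum>i<p. card (S \<inter> B i))" by (rule sum_mono) (use big in auto)
      also have "\<dots> = card (\<Union>i\<in>{..<p}. S \<inter> B i)"
        by (rule card_UN_disjoint[symmetric]) (use S Bdisj in \<open>auto intro: finite_subset\<close>)
      also have "\<dots> \<le> card S" by (rule card_mono) (use S in \<open>auto intro: finite_subset\<close>)
      finally show False using kp S unfolding p_def by linarith
    qed
    define T where "T = {1..n} - S"
    have finT: "finite T" unfolding T_def by simp
    define A where "A = {u \<in> cube T. \<exists>v \<in> cube S. f (u \<union> v)}"
    have "A \<subseteq> Pow T - Pow (T - B i)"
    proof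
      fix u assume uA: "u \<in> A"
      then obtain v where v: "v \<subseteq> S" "u \<union> v \<in> F" "u \<subseteq> T" unfolding A_def cube_def f_def by auto
      have "u \<union> v \<notin> Z" using v(2) F(1) unfolding G_def by auto
      moreover have "u \<union> v \<in> Pow {1..n}" using v S unfolding T_def by auto
      ultimately have "\<not> card ((u \<union> v) \<inter> B i) \<le> t" using i unfolding Z_def by auto
      moreover have "card (v \<inter> B i) \<le> card (S \<inter> B i)"
        by (rule card_mono) (use v(1) in \<open>auto simp: B_def\<close>)
      then have "card (v \<inter> B i) \<le> t" using i(2) by linarith
      ultimately have "u \<inter> B i \<noteq> {}" by (metis Int_Un_distrib2 sup_bot_left)
      then show "u \<in> Pow T - Pow (T - B i)" using v(3) by auto
    qed
    then have "card A \<le> card (Pow T - Pow (T - B i))" by (rule card_mono[rotated]) (simp add: finT)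
    also have "\<dots> = 2 ^ card T - 2 ^ card (T - B i)"
      by (subst card_Diff_subset) (auto simp: finT card_Pow)
    finally have cA0: "card A \<le> 2 ^ card T - 2 ^ card (T - B i)" .
    have pw: "(2::nat) ^ card (T - B i) \<le> 2 ^ card T"
      by (rule power_increasing) (auto intro: card_mono finT)
    have "real (card A) \<le> real (2 ^ card T - 2 ^ card (T - B i))" using cA0 by (rule of_nat_mono)
    also have "real (2 ^ card T - 2 ^ card (T - B i)) = 2 ^ card T - 2 ^ card (T - B i)"
      using pw by (simp add: of_nat_diff)
    finally have cA: "real (card A) \<le> 2 ^ card T - 2 ^ card (T - B i)" .
    have "card T \<le> card ((T - B i) \<union> B i)" by (rule card_mono) (auto simp: finT B_def)
    also have "\<dots> \<le> card (T - B i) + card (B i)" by (rule card_Un_le)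
    finally have "card T \<le> card (T - B i) + card (B i)" .
    then have ctm: "card T \<le> card (T - B i) + m" using cardB by simp
    have le: "(2::real) ^ card T \<le> 2 ^ card (T - B i) * 2^m"
    proof -
      have "(2::real) ^ card T \<le> 2 ^ (card (T - B i) + m)" by (rule power_increasing) (use ctm in auto)
      then show ?thesis by (simp add: power_add)
    qed
    have "Jplus n S f = real (card A) / 2 ^ card T" unfolding Jplus_def A_def T_def ..
    also have "\<dots> \<le> (2 ^ card T - 2 ^ card (T - B i)) / 2 ^ card T"
      by (rule divide_right_mono[OF cA]) simp
    also have "\<dots> = 1 - 2 ^ card (T - B i) / 2 ^ card T" by (simp add: diff_divide_distrib)
    also have "\<dots> \<le> 1 - 1 / 2^m"
    proof -
      have "1 / 2^m \<le> (2::real) ^ card (T - B i) / 2 ^ card T"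
        using le by (simp add: field_simps)
      then show ?thesis by simp
    qed
    finally show ?thesis .
  qed
  show ?thesis using c1 c2 by blast
qed



lemma key_q:
  fixes \<delta> :: real
  assumes "0 < \<delta>" "\<delta> < 1"
  shows "(1 + (1-\<delta>/2))/2 < (1-\<delta>/2) powr (1/2-\<delta>/2)"
proof -
  define r where "r = 1 - \<delta>/2"
  define \<beta> where "\<beta> = 1/2 - \<delta>/2"
  have r0: "0 < r" "r < 1" using assms unfolding r_def by auto
  have b0: "0 < \<beta>" using assms unfolding \<beta>_def by auto
  have "ln (1/r) \<le> 1/r - 1" using r0 by (intro ln_le_minus_one) simp
  then have lnr: "ln r \<ge> 1 - 1/r" using r0 by (simp add: ln_div)
  have "r powr \<beta> = exp (\<beta> * ln r)" using r0 by (simp add: powr_def)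
  also have "\<dots> \<ge> 1 + \<beta> * ln r" by (rule exp_ge_add_one_self)
  finally have "r powr \<beta> \<ge> 1 + \<beta> * (1 - 1/r)"
    using mult_left_mono[OF lnr, of \<beta>] b0 by linarith
  moreover have "1 + \<beta> * (1 - 1/r) > (1 + r)/2"
  proof -
    have "\<beta> * (1/r - 1) = \<beta> * (\<delta>/2) / r" using r0 unfolding r_def by (simp add: field_simps)
    also have "\<dots> < (\<delta>/4)" using assms r0 unfolding r_def \<beta>_def by (simp add: field_simps)
    finally have h: "\<beta> * (1/r - 1) < \<delta>/4" .
    have "(1+r)/2 = 1 - \<delta>/4" unfolding r_def by simp
    moreover have "\<beta>*(1-1/r) = - (\<beta>*(1/r-1))" by (simp add: algebra_simps)
    ultimately show ?thesis using h by linarith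
  qed
  ultimately show ?thesis unfolding r_def \<beta>_def by linarith
qed

lemma binom_q:
  fixes r \<beta> :: real
  assumes "0 < r" "r < 1" "0 < \<beta>" "real t \<le> \<beta> * real m"
  shows "real (\<Sum>j\<le>t. m choose j) \<le> ((1+r) / (r powr \<beta>))^m"
proof -
  have "r powr (\<beta> * real m) \<le> r powr (real t)"
    by (rule powr_mono') (use assms in auto)
  then have "(r powr \<beta>)^m \<le> r^t"
    using assms by (simp add: powr_power powr_realpow mult.commute)
  moreover have "0 < (r powr \<beta>)^m" using assms by simp
  ultimately have "(1/r)^t \<le> 1 / (r powr \<beta>)^m"
    using assms by (simp add: power_one_over divide_simps)
  then have "(1/r)^t * (1+r)^m \<le> 1 / (r powr \<beta>)^m * (1+r)^m"
    by (rule mult_right_mono) (use assms in simp)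
  also have "\<dots> = ((1+r) / (r powr \<beta>))^m" by (simp add: power_divide)
  finally show ?thesis using binom_bound[where r=r and t=t and m=m] assms by linarith
qed

lemma ev1: "0 < A \<Longrightarrow> eventually (\<lambda>n::nat. A * ln (real n) + 1 \<le> real n) sequentially"
  by real_asymp
lemma ev2: "0 < A \<Longrightarrow> 0 < d \<Longrightarrow> 0 < b \<Longrightarrow> eventually (\<lambda>n::nat. b*(A * ln (real n) + 1) \<le> d/2 * real n) sequentially"
  by real_asymp
lemma ev3: "0 < a \<Longrightarrow> eventually (\<lambda>n::nat. 1/ real n + 1/2^n \<le> a) sequentially"
  by real_asymp



theorem theorem1p1:
  fixes \<alpha> \<delta> :: real
  assumes "0 < \<alpha>" "\<alpha> < 1" "0 < \<delta>" "\<delta> < 1"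
  shows "\<exists>C > 0. \<exists>N. \<forall>n \<ge> N. \<exists>f :: nat set \<Rightarrow> bool.
           mu n f = real_of_int \<lceil>\<alpha> * 2 ^ n\<rceil> / 2 ^ n \<and>
           (\<forall>S. S \<subseteq> {1..n} \<and> card S = nat \<lfloor>(1/2 - \<delta>) * real n\<rfloor> \<longrightarrow>
                Jplus n S f < 1 - real n powr (- C))"
proof -
  define r where "r = 1 - \<delta>/2"
  define \<beta> where "\<beta> = 1/2 - \<delta>/2"
  define q where "q = (1+r)/2/(r powr \<beta>)"
  have r0: "0 < r" "r < 1" using assms unfolding r_def by auto
  have b0: "0 < \<beta>" using assms unfolding \<beta>_def by auto
  have rb: "0 < r powr \<beta>" using r0 by simp
  have q0: "0 < q" using r0 rb unfolding q_def by simp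
  have q1: "q < 1" using key_q[OF assms(3,4)] rb unfolding q_def r_def \<beta>_def by simp
  have lnq: "ln q < 0" using q0 q1 by simp
  define A where "A = - 2 / ln q"
  have A0: "0 < A" using lnq unfolding A_def by (simp add: divide_neg_neg)
  have Alnq: "A * ln q = -2" using lnq unfolding A_def by simp
  define C where "C = A * ln 2 + 1"
  have "0 < A * ln (2::real)" using A0 by simp
  then have C0: "0 < C" unfolding C_def by linarith
  have "eventually (\<lambda>n::nat. A * ln (real n) + 1 \<le> real n) sequentially" by (rule ev1[OF A0])
  moreover have "eventually (\<lambda>n::nat. \<beta>*(A * ln (real n) + 1) \<le> \<delta>/2 * real n) sequentially"
    by (rule ev2[OF A0 assms(3) b0])
  moreover have "eventually (\<lambda>n::nat. 1/ real n + 1/2^n \<le> 1 - \<alpha>) sequentially"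
    by (rule ev3) (use assms in simp)
  moreover have "eventually (\<lambda>n::nat. 3 \<le> n) sequentially" by (rule eventually_ge_at_top)
  ultimately have "eventually (\<lambda>n::nat. (A * ln (real n) + 1 \<le> real n) \<and>
      (\<beta>*(A * ln (real n) + 1) \<le> \<delta>/2 * real n) \<and> (1/ real n + 1/2^n \<le> 1 - \<alpha>) \<and> 3 \<le> n) sequentially"
    by eventually_elim blast
  then obtain N where N: "\<And>n. n \<ge> N \<Longrightarrow> (A * ln (real n) + 1 \<le> real n) \<and>
      (\<beta>*(A * ln (real n) + 1) \<le> \<delta>/2 * real n) \<and> (1/ real n + 1/2^n \<le> 1 - \<alpha>) \<and> 3 \<le> n"
    unfolding eventually_sequentially by blast
  have "\<forall>n \<ge> N. \<exists>f :: nat set \<Rightarrow> bool.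
           mu n f = real_of_int \<lceil>\<alpha> * 2 ^ n\<rceil> / 2 ^ n \<and>
           (\<forall>S. S \<subseteq> {1..n} \<and> card S = nat \<lfloor>(1/2 - \<delta>) * real n\<rfloor> \<longrightarrow>
                Jplus n S f < 1 - real n powr (- C))"
  proof (intro allI impI)
    fix n assume "N \<le> n"
    note Nn = N[OF this]
    have n3: "3 \<le> n" using Nn by simp
    have E1: "A * ln (real n) + 1 \<le> real n" and E2: "\<beta>*(A * ln (real n) + 1) \<le> \<delta>/2 * real n"
      and E3: "1/ real n + 1/2^n \<le> 1 - \<alpha>" using Nn by auto
    have lnn: "0 < ln (real n)" using n3 by simp
    have Al: "0 < A * ln (real n)" using A0 lnn by simp
    define m where "m = nat \<lceil>A * ln (real n)\<rceil>"
    define t where "t = nat \<lfloor>\<beta> * real m\<rfloor>"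
    define p where "p = n div m"
    define k where "k = nat \<lfloor>(1/2 - \<delta>) * real n\<rfloor>"
    define M where "M = nat \<lceil>\<alpha> * 2 ^ n\<rceil>"
    have mge: "A * ln (real n) \<le> real m" unfolding m_def using Al by linarith
    have mlt: "real m < A * ln (real n) + 1" unfolding m_def using Al by linarith
    have m0: "0 < m" using mge Al by simp
    have mn: "m \<le> n" using mlt E1 by simp
    have tle: "real t \<le> \<beta> * real m" unfolding t_def using b0 by simp
    have tgt: "\<beta> * real m < real t + 1" unfolding t_def using b0 by linarith
    have kle: "real k \<le> max 0 ((1/2 - \<delta>) * real n)" unfolding k_def by linarith
    have pmn: "real n - real m < real p * real m"
    proof -
      have "n = p * m + n mod m" unfolding p_def by simp
      moreover have "n mod m < m" using m0 by simp
      ultimately have "n < p * m + m" by linarith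
      then show ?thesis by (simp flip: of_nat_mult of_nat_add)
    qed
    have kp: "k < p * (t+1)"
    proof -
      have h1: "\<beta> * real m \<le> \<beta> * (A * ln (real n) + 1)" using mlt b0 by (simp add: mult_left_mono)
      have h2: "0 \<le> \<beta> * (real n - real m)" using mn b0 by simp
      have h4: "\<beta> * (real n - real m) = (1/2-\<delta>)*real n + \<delta>/2*real n - \<beta> * real m"
        unfolding \<beta>_def by (simp add: field_simps)
      have "max 0 ((1/2 - \<delta>) * real n) \<le> \<beta> * (real n - real m)"
        using h1 h2 h4 E2 by linarith
      also have "\<dots> < \<beta> * (real p * real m)" using pmn b0 by simp
      also have "\<dots> = real p * (\<beta> * real m)" by simp
      also have "\<dots> \<le> real p * (real t + 1)" using tgt by (simp add: mult_left_mono)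
      finally have "max 0 ((1/2 - \<delta>) * real n) < real p * (real t + 1)" .
      then have "real k < real p * (real t + 1)" using kle by linarith
      then have "real k < real (p * (t+1))" by (simp add: algebra_simps)
      then show ?thesis by (simp only: of_nat_less_iff)
    qed
    have qm: "q^m \<le> 1 / (real n)^2"
    proof -
      have "q^m = q powr real m" using q0 by (simp add: powr_realpow)
      also have "\<dots> \<le> q powr (A * ln (real n))" by (rule powr_mono') (use mge q0 q1 in auto)
      also have "\<dots> = exp (A * ln (real n) * ln q)" using q0 by (simp add: powr_def)
      also have "A * ln (real n) * ln q = -2 * ln (real n)"
      proof -
        have "A * ln (real n) * ln q = (A * ln q) * ln (real n)"
          by (simp only: mult.assoc mult.commute[of "ln (real n)" "ln q"])
        then show ?thesis by (simp only: Alnq)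
      qed
      also have "exp (-2 * ln (real n)) = 1 / (real n)^2"
      proof -
        have "exp (2 * ln (real n)) = exp (ln (real n) + ln (real n))" by (simp only: mult_2)
        also have "\<dots> = (real n)^2" using n3 by (simp only: exp_add power2_eq_square) simp
        finally have e2: "exp (2 * ln (real n)) = (real n)^2" .
        have "exp (-2 * ln (real n)) = inverse (exp (2 * ln (real n)))" by (simp add: exp_minus[symmetric])
        then show ?thesis using e2 by (simp add: inverse_eq_divide)
      qed
      finally show ?thesis .
    qed
    have sumb: "real (\<Sum>j\<le>t. m choose j) \<le> 2^m * q^m"
    proof -
      have "real (\<Sum>j\<le>t. m choose j) \<le> ((1+r) / (r powr \<beta>))^m" by (rule binom_q) (use r0 b0 tle in auto)
      also have "(1+r) / (r powr \<beta>) = 2 * q" unfolding q_def using rb by (simp add: field_simps)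
      finally show ?thesis by (simp add: power_mult_distrib)
    qed
    have cnt: "(n div m) * ((\<Sum>j\<le>t. m choose j) * 2^(n-m)) + M \<le> 2^n"
    proof -
      have pn: "real p \<le> real n" unfolding p_def by simp
      have "real (\<Sum>j\<le>t. m choose j) * 2^(n-m) \<le> 2^m * q^m * 2^(n-m)"
        using sumb by (simp add: mult_right_mono)
      also have "\<dots> = q^m * 2^n"
      proof -
        have "(2::real)^m * 2^(n-m) = 2^(m + (n-m))" by (simp add: power_add)
        also have "m + (n - m) = n" using mn by simp
        finally have "(2::real)^m * 2^(n-m) = 2^n" .
        then show ?thesis by (metis mult.commute mult.left_commute)
      qed
      also have "\<dots> \<le> 1 / (real n)^2 * 2^n" by (rule mult_right_mono[OF qm]) simp
      finally have s1: "real (\<Sum>j\<le>t. m choose j) * 2^(n-m) \<le> 2^n / (real n)^2" by simp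
      have "real p * (real (\<Sum>j\<le>t. m choose j) * 2^(n-m)) \<le> real n * (2^n / (real n)^2)"
        by (rule mult_mono[OF pn s1]) (auto intro!: mult_nonneg_nonneg sum_nonneg)
      also have "\<dots> = 2^n / real n" using n3 by (simp add: power2_eq_square)
      finally have s2: "real p * (real (\<Sum>j\<le>t. m choose j) * 2^(n-m)) \<le> 2^n / real n" .
      have ax: "0 \<le> \<alpha> * 2^n" using assms(1) by simp
      have "real M = real_of_int \<lceil>\<alpha> * 2^n\<rceil>" unfolding M_def using ax by simp
      then have Mle: "real M \<le> \<alpha> * 2^n + 1" using ceiling_correct[of "\<alpha> * 2^n"] by linarith
      have "2^n / real n + 1 \<le> (1-\<alpha>) * 2^n"
      proof -
        have "(1/ real n + 1/2^n) * 2^n \<le> (1 - \<alpha>) * 2^n" using E3 by (simp add: mult_right_mono)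
        then show ?thesis by (simp add: algebra_simps)
      qed
      then have "real p * (real (\<Sum>j\<le>t. m choose j) * 2^(n-m)) + real M \<le> 2^n"
        using s2 Mle by (simp add: algebra_simps)
      then have "real (p * ((\<Sum>j\<le>t. m choose j) * 2^(n-m)) + M) \<le> real (2^n)" by simp
      then show ?thesis unfolding p_def by (simp only: of_nat_le_iff)
    qed
    obtain f where f1: "card {x \<in> cube {1..n}. f x} = M"
      and f2: "\<forall>S. S \<subseteq> {1..n} \<and> card S = k \<longrightarrow> Jplus n S f \<le> 1 - 1/2^m"
      using core[OF m0 mn kp[unfolded p_def] cnt] by blast
    have mu: "mu n f = real_of_int \<lceil>\<alpha> * 2 ^ n\<rceil> / 2 ^ n"
    proof -
      have "real M = real_of_int \<lceil>\<alpha> * 2 ^ n\<rceil>" unfolding M_def using assms(1) by simp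
      then show ?thesis unfolding mu_def f1 by simp
    qed
    have fin: "1 - 1/2^m < 1 - real n powr (- C)"
    proof -
      define a where "a = real n powr (A * ln 2)"
      have a0: "0 < a" unfolding a_def using n3 by simp
      have "(2::real)^m = 2 powr real m" by (simp add: powr_realpow)
      also have "\<dots> \<le> 2 powr (A * ln (real n) + 1)" by (rule powr_mono) (use mlt in auto)
      also have "\<dots> = 2 * 2 powr (A * ln (real n))" by (simp add: powr_add)
      also have "2 powr (A * ln (real n)) = a" unfolding a_def using n3 by (simp add: powr_def algebra_simps)
      finally have m2: "(2::real)^m \<le> 2 * a" .
      have "real n powr (- C) = inverse (real n powr C)" by (rule powr_minus)
      also have "real n powr C = a * real n" unfolding C_def a_def using n3 by (simp add: powr_add)
      also have "inverse (a * real n) = 1 / (a * real n)" by (simp add: inverse_eq_divide)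
      also have "\<dots> < 1 / (2 * a)" using a0 n3 by (simp add: divide_strict_left_mono)
      also have "\<dots> \<le> 1 / 2^m" using m2 a0 by (simp add: divide_left_mono)
      finally show ?thesis by simp
    qed
    show "\<exists>f :: nat set \<Rightarrow> bool.
           mu n f = real_of_int \<lceil>\<alpha> * 2 ^ n\<rceil> / 2 ^ n \<and>
           (\<forall>S. S \<subseteq> {1..n} \<and> card S = nat \<lfloor>(1/2 - \<delta>) * real n\<rfloor> \<longrightarrow>
                Jplus n S f < 1 - real n powr (- C))"
    proof (intro exI conjI allI impI)
      show "mu n f = real_of_int \<lceil>\<alpha> * 2 ^ n\<rceil> / 2 ^ n" by (rule mu)
    next
      fix S assume "S \<subseteq> {1..n} \<and> card S = nat \<lfloor>(1/2 - \<delta>) * real n\<rfloor>"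
      then have "Jplus n S f \<le> 1 - 1/2^m" using f2 unfolding k_def by blast
      then show "Jplus n S f < 1 - real n powr (- C)" using fin by linarith
    qed
  qed
  then show ?thesis using C0 by blast
qed

end
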